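(* Let $g\ge2$, let $q_i(x,y)=a_ix^2+2b_ixy+c_iy^2$ ($i=1,\ldots,g$) be integer binary quadratic forms, irreducible over the integers, with $a_i\equiv1\pmod4$, and with $D:=\prod_{p\le2g}p\prod_k a_kc_k\delta_k\prod_{i<j}\operatorname{Res}(q_i,q_j)\neq0$. Let $p$ be prime, $e_1,\ldots,e_g\ge0$ integers, and $\sigma\in S_g$ with $e_{\sigma(1)}\le\cdots\le e_{\sigma(g)}$. Then $$\rho(p^{e_1},\ldots,p^{e_g})\ll(e_{\sigma(g)}-e_{\sigma(g-1)}+1)\,p^{2e_{\sigma(1)}+\cdots+2e_{\sigma(g-1)}+e_{\sigma(g)}}.$$ Also $$\rho(p,\ldots,p)=\rho^*(p,\ldots,p)+p^{2(g-1)}=p^{2(g-1)}+O(p),$$ and for all but finitely many primes $p$, for each $n=1,\ldots,g$ one has $\rho(p^{\alpha_1},\ldots,p^{\alpha_g})\le2p$ where $\alpha_i=1$ if $i=n$ and $\alpha_i=0$ otherwise. Implied constants depend only on the forms.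
   Context: $\delta_k$ is the discriminant of $q_k$, $\operatorname{Res}$ the resultant. For positive integers $d_1,\ldots,d_g$: $\Lambda_{\mathbf d}:=\{\mathbf x\in\mathbb Z^2:d_i\mid q_i(\mathbf x)\ \forall i\}$, $\rho(\mathbf d):=\#(\Lambda_{\mathbf d}\cap[0,d_1\cdots d_g)^2)$, $\Lambda^*_{\mathbf d}:=\{\mathbf x\in\Lambda_{\mathbf d}:\gcd(x_1,x_2,d_1\cdots d_g)=1\}$, $\rho^*(\mathbf d):=\#(\Lambda^*_{\mathbf d}\cap[0,d_1\cdots d_g)^2)$. *)

theory Defs
  imports "HOL-Combinatorics.Permutations" "HOL-Computational_Algebra.Primes" "HOL-Number_Theory.Cong" Complex_Main
begin

definition qform :: "int \<Rightarrow> int \<Rightarrow> int \<Rightarrow> int \<Rightarrow> int \<Rightarrow> int" where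
  "qform a b c x y = a * x^2 + 2 * b * x * y + c * y^2"

definition disc_form :: "int \<Rightarrow> int \<Rightarrow> int \<Rightarrow> int" where
  "disc_form a b c = (2 * b)^2 - 4 * a * c"

text \<open>Resultant of the binary quadratic forms a1 x^2 + B1 x y + c1 y^2 and
  a2 x^2 + B2 x y + c2 y^2 (Sylvester determinant), with B = 2 b.\<close>
definition res_form :: "int \<Rightarrow> int \<Rightarrow> int \<Rightarrow> int \<Rightarrow> int \<Rightarrow> int \<Rightarrow> int" where
  "res_form a1 b1 c1 a2 b2 c2 =
     (a1 * c2 - a2 * c1)^2 - (a1 * (2*b2) - a2 * (2*b1)) * ((2*b1) * c2 - (2*b2) * c1)"

text \<open>Irreducibility of the form in Z[x,y]: a factorisation of a homogeneous quadratic
  into non-units is either a non-unit constant times a form, or a product of two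
  integer linear forms.\<close>
definition irreducible_form :: "int \<Rightarrow> int \<Rightarrow> int \<Rightarrow> bool" where
  "irreducible_form a b c \<longleftrightarrow>
     gcd (gcd a (2 * b)) c = 1 \<and>
     \<not> (\<exists>r s t u :: int. \<forall>x y. qform a b c x y = (r * x + s * y) * (t * x + u * y))"

definition rho :: "nat \<Rightarrow> (nat \<Rightarrow> int) \<Rightarrow> (nat \<Rightarrow> int) \<Rightarrow> (nat \<Rightarrow> int) \<Rightarrow> (nat \<Rightarrow> nat) \<Rightarrow> nat" where
  "rho g a b c d =
     (let P = (\<Prod>i\<in>{1..g}. int (d i)) in
      card {(x1::int, x2::int). 0 \<le> x1 \<and> x1 < P \<and> 0 \<le> x2 \<and> x2 < P \<and>
              (\<forall>i\<in>{1..g}. int (d i) dvd qform (a i) (b i) (c i) x1 x2)})"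

definition rho_star :: "nat \<Rightarrow> (nat \<Rightarrow> int) \<Rightarrow> (nat \<Rightarrow> int) \<Rightarrow> (nat \<Rightarrow> int) \<Rightarrow> (nat \<Rightarrow> nat) \<Rightarrow> nat" where
  "rho_star g a b c d =
     (let P = (\<Prod>i\<in>{1..g}. int (d i)) in
      card {(x1::int, x2::int). 0 \<le> x1 \<and> x1 < P \<and> 0 \<le> x2 \<and> x2 < P \<and>
              (\<forall>i\<in>{1..g}. int (d i) dvd qform (a i) (b i) (c i) x1 x2) \<and>
              gcd (gcd x1 x2) P = 1})"

end

theory Submission
  imports Defs
begin



lemma res_id_x:
  "res_form a1 b1 c1 a2 b2 c2 * x^3 =
     ((a1*c2^2 - (2*b1)*(2*b2)*c2 + c1*(2*b2)^2 - c1*a2*c2) * x + (-(2*b1)*c2^2 + c1*(2*b2)*c2) * y) * qform a1 b1 c1 x y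
   + (((2*b1)^2*c2 - (2*b1)*c1*(2*b2) - a1*c1*c2 + c1^2*a2) * x + ((2*b1)*c1*c2 - c1^2*(2*b2)) * y) * qform a2 b2 c2 x y"
  unfolding res_form_def qform_def by algebra

lemma res_id_y:
  "res_form a1 b1 c1 a2 b2 c2 * y^3 =
     ((a1*a2*(2*b2) - (2*b1)*a2^2) * x + (a1*(2*b2)^2 - a1*a2*c2 - (2*b1)*a2*(2*b2) + c1*a2^2) * y) * qform a1 b1 c1 x y
   + ((-(a1^2)*(2*b2) + a1*(2*b1)*a2) * x + (a1^2*c2 - a1*(2*b1)*(2*b2) + (2*b1)^2*a2 - a1*c1*a2) * y) * qform a2 b2 c2 x y"
  unfolding res_form_def qform_def by algebra

lemma res_prim:
  fixes p :: int
  assumes "prime p" "\<not> p dvd x \<or> \<not> p dvd y"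
    "p^m dvd qform a1 b1 c1 x y" "p^m dvd qform a2 b2 c2 x y"
  shows "p^m dvd res_form a1 b1 c1 a2 b2 c2"
proof -
  have hx: "p^m dvd res_form a1 b1 c1 a2 b2 c2 * x^3"
    using assms(3,4) by (subst res_id_x) (intro dvd_add dvd_mult; assumption)
  have hy: "p^m dvd res_form a1 b1 c1 a2 b2 c2 * y^3"
    using assms(3,4) by (subst res_id_y) (intro dvd_add dvd_mult; assumption)
  show ?thesis
  proof (cases "p dvd x")
    case False
    then have "coprime (p^m) (x^3)" using assms(1)
      by (simp add: coprime_power_left_iff prime_imp_coprime)
    then show ?thesis using hx by (simp add: coprime_dvd_mult_left_iff)
  next
    case True
    then have "\<not> p dvd y" using assms(2) by blast
    then have "coprime (p^m) (y^3)" using assms(1)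
      by (simp add: coprime_power_left_iff prime_imp_coprime)
    then show ?thesis using hy by (simp add: coprime_dvd_mult_left_iff)
  qed
qed


lemma pow_cancel:
  fixes p x y :: int
  assumes "prime p" "p^j dvd x * y" "\<not> p^(w+1) dvd x"
  shows "p^(j-w) dvd y"
proof (cases "y = 0")
  case True then show ?thesis by simp
next
  case False
  have x0: "x \<noteq> 0" using assms(3) dvd_0_right by metis
  have nu: "\<not> is_unit p" using assms(1) not_prime_unit by blast
  have xy0: "x * y \<noteq> 0" using x0 False by simp
  have 1: "multiplicity p x < w+1" using multiplicity_lessI[OF x0 nu assms(3)] .
  have 2: "j \<le> multiplicity p (x*y)" using multiplicity_geI[OF xy0 nu assms(2)] .
  have 3: "multiplicity p (x*y) = multiplicity p x + multiplicity p y"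
    using prime_elem_multiplicity_mult_distrib[OF prime_imp_prime_elem[OF assms(1)] x0 False] .
  have "j - w \<le> multiplicity p y" using 1 2 3 by linarith
  then show ?thesis by (rule multiplicity_dvd')
qed

lemma card_class_le:
  fixes m n r :: int
  assumes "m > 0" "n \<ge> 0"
  assumes "m dvd n"
  shows "card {t \<in> {0..<n}. m dvd t - r} \<le> nat (n div m)"
proof -
  have "inj_on (\<lambda>t. t div m) {t \<in> {0..<n}. m dvd t - r}"
  proof (rule inj_onI)
    fix s t assume s: "s \<in> {t \<in> {0..<n}. m dvd t - r}" and t: "t \<in> {t \<in> {0..<n}. m dvd t - r}"
      and e: "s div m = t div m"
    have "s mod m = r mod m" using s by (simp add: mod_eq_dvd_iff)
    moreover have "t mod m = r mod m" using t by (simp add: mod_eq_dvd_iff)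
    ultimately show "s = t" using e by (metis div_mult_mod_eq)
  qed
  moreover have "(\<lambda>t. t div m) ` {t \<in> {0..<n}. m dvd t - r} \<subseteq> {0..<n div m}"
  proof
    fix z assume "z \<in> (\<lambda>t. t div m) ` {t \<in> {0..<n}. m dvd t - r}"
    then obtain t where t: "0 \<le> t" "t < n" "z = t div m" by auto
    obtain k where k: "n = m * k" using assms(3) by (elim dvdE)
    have z0: "0 \<le> z" using t assms(1) by (simp add: pos_imp_zdiv_nonneg_iff)
    have "t = m * (t div m) + t mod m" by simp
    moreover have "0 \<le> t mod m" using assms(1) by simp
    ultimately have "m * (t div m) \<le> t" by linarith
    then have "m * z \<le> t" using t(3) by simp
    then have "m * z < m * k" using t k by linarith
    then have "z < k" using assms(1) by (simp add: mult_less_cancel_left_pos)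
    then show "z \<in> {0..<n div m}" using z0 k assms(1) by simp
  qed
  ultimately have "card {t \<in> {0..<n}. m dvd t - r} \<le> card {0..<n div m}"
    by (metis card_image card_mono finite_atLeastLessThan_int)
  then show ?thesis by simp
qed




lemma quad_u_id:
  "(2*a*t0 + 2*b)^2 = 4*a*(a*t0^2 + 2*b*t0 + c) + disc_form a b c"
  unfolding disc_form_def by algebra

lemma quad_diff_id:
  fixes a b c t t0 :: int
  shows "(a*t^2 + 2*b*t + c) - (a*t0^2 + 2*b*t0 + c) = (t - t0) * ((2*a*t0 + 2*b) + a*(t - t0))"
  by algebra

lemma not_dvd_mult_Suc:
  fixes p x :: int
  assumes "prime p" "x \<noteq> 0"
  shows "\<not> p^(multiplicity p x + 1) dvd x"
proof
  assume h: "p^(multiplicity p x + 1) dvd x"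
  have nu: "\<not> is_unit p" using assms(1) not_prime_unit by blast
  have "multiplicity p x + 1 \<le> multiplicity p x" using multiplicity_geI[OF assms(2) nu h] .
  then show False by simp
qed

lemma dvd_abs_le:
  fixes d x :: int
  assumes "d dvd x" "x \<noteq> 0" "d > 0"
  shows "d \<le> \<bar>x\<bar>"
proof -
  have "d dvd \<bar>x\<bar>" using assms(1) by simp
  moreover have "\<bar>x\<bar> > 0" using assms(2) by simp
  ultimately show ?thesis by (rule zdvd_imp_le)
qed

lemma root_count:
  fixes p a b c :: int
  assumes p: "prime p" and a0: "a \<noteq> 0" and D0: "disc_form a b c \<noteq> 0"
  shows "int (card {t \<in> {0..<p^j}. p^j dvd a*t^2 + 2*b*t + c}) \<le> \<bar>disc_form a b c\<bar> * (1 + \<bar>a\<bar>)"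
proof -
  define m where "m = p^j"
  define \<Delta> where "\<Delta> = disc_form a b c"
  define T where "T = {t \<in> {0..<m}. m dvd a*t^2 + 2*b*t + c}"
  have pp: "p > 1" using p prime_gt_1_int by blast
  have mpos: "m > 0" unfolding m_def using pp by simp
  have finT: "finite T" unfolding T_def by (rule finite_subset[of _ "{0..<m}"]) auto
  have absD: "\<bar>\<Delta>\<bar> \<ge> 1" using D0 unfolding \<Delta>_def by simp
  have absa: "\<bar>a\<bar> \<ge> 0" by simp
  show ?thesis
  proof (cases "T = {}")
    case True
    then have "card T = 0" by simp
    then show ?thesis unfolding T_def m_def by simp
  next
    case False
    then obtain t0 where t0: "t0 \<in> T" by blast
    show ?thesis
    proof (cases "m dvd \<Delta>")
      case True
      have "m \<le> \<bar>\<Delta>\<bar>" using dvd_abs_le[OF True _ mpos] D0 unfolding \<Delta>_def by simp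
      have "card T \<le> card {0..<m}" unfolding T_def by (intro card_mono) auto
      then have "int (card T) \<le> m" using mpos by simp
      also have "\<dots> \<le> \<bar>\<Delta>\<bar>" by fact
      also have "\<dots> \<le> \<bar>\<Delta>\<bar> * (1 + \<bar>a\<bar>)" using absD by (simp add: mult_le_cancel_left1)
      finally show ?thesis unfolding T_def m_def \<Delta>_def .
    next
      case nD: False
      define u where "u = 2*a*t0 + 2*b"
      have Ft0: "m dvd a*t0^2 + 2*b*t0 + c" using t0 unfolding T_def by simp
      have uid: "u^2 = 4*a*(a*t0^2 + 2*b*t0 + c) + \<Delta>" unfolding u_def \<Delta>_def by (rule quad_u_id)
      have m4: "m dvd 4*a*(a*t0^2 + 2*b*t0 + c)" using Ft0 by (rule dvd_mult)
      have u0: "u \<noteq> 0"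
      proof
        assume "u = 0"
        then have "\<Delta> = - (4*a*(a*t0^2 + 2*b*t0 + c))" using uid by (simp add: power2_eq_square)
        then have "m dvd \<Delta>" using m4 by (simp only: dvd_minus_iff)
        then show False using nD by blast
      qed
      define w where "w = multiplicity p u"
      have pw_u: "p^w dvd u" unfolding w_def by (rule multiplicity_dvd)
      have npw_u: "\<not> p^(w+1) dvd u" unfolding w_def using not_dvd_mult_Suc[OF p u0] .
      have wj: "w < j"
      proof (rule ccontr)
        assume "\<not> w < j"
        then have "p^j dvd p^w" by (simp add: le_imp_power_dvd)
        then have "m dvd u" using pw_u unfolding m_def by (rule dvd_trans)
        then have "m dvd u^2" by (simp add: power2_eq_square)
        then have "m dvd u^2 - 4*a*(a*t0^2 + 2*b*t0 + c)" using m4 by (rule dvd_diff)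
        then have "m dvd \<Delta>" using uid by simp
        then show False using nD by simp
      qed
      have pwm: "p^w dvd m" unfolding m_def using wj by (simp add: le_imp_power_dvd)
      have "p^w dvd u^2 - 4*a*(a*t0^2 + 2*b*t0 + c)"
        using dvd_mult2[OF pw_u, of u] dvd_trans[OF pwm m4] unfolding power2_eq_square by (rule dvd_diff)
      then have pwD: "p^w dvd \<Delta>" using uid by simp
      have pwpos: "p^w > 0" using pp by simp
      have pwle: "p^w \<le> \<bar>\<Delta>\<bar>" using dvd_abs_le[OF pwD _ pwpos] D0 unfolding \<Delta>_def by simp
      define z where "z = multiplicity p a"
      have pz_a: "p^z dvd a" unfolding z_def by (rule multiplicity_dvd)
      have npz_a: "\<not> p^(z+1) dvd a" unfolding z_def using not_dvd_mult_Suc[OF p a0] .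
      have pzpos: "p^z > 0" using pp by simp
      have pzle: "p^z \<le> \<bar>a\<bar>" using dvd_abs_le[OF pz_a a0 pzpos] .
      define A where "A = {t \<in> {0..<m}. p^(j-w) dvd t - t0}"
      define B where "B = {t \<in> {0..<m}. p^(j-w) dvd u + a*(t - t0)}"
      have TAB: "T \<subseteq> A \<union> B"
      proof
        fix t assume tT: "t \<in> T"
        have Ft: "m dvd a*t^2 + 2*b*t + c" using tT unfolding T_def by simp
        have "m dvd (a*t^2 + 2*b*t + c) - (a*t0^2 + 2*b*t0 + c)" using Ft Ft0 by (rule dvd_diff)
        then have md: "p^j dvd (t - t0) * (u + a*(t - t0))" unfolding quad_diff_id u_def m_def .
        have trange: "t \<in> {0..<m}" using tT unfolding T_def by simp
        show "t \<in> A \<union> B"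
        proof (cases "p^(w+1) dvd t - t0")
          case True
          have "\<not> p^(w+1) dvd u + a*(t - t0)"
          proof
            assume h: "p^(w+1) dvd u + a*(t - t0)"
            have "p^(w+1) dvd a*(t - t0)" using True by (rule dvd_mult)
            then have "p^(w+1) dvd (u + a*(t - t0)) - a*(t - t0)" using h by (intro dvd_diff)
            then show False using npw_u by (metis add_diff_cancel_right')
          qed
          moreover have "p^j dvd (u + a*(t - t0)) * (t - t0)" using md by (simp add: mult.commute)
          ultimately have "p^(j-w) dvd t - t0" using pow_cancel[OF p] by blast
          then show ?thesis unfolding A_def using trange by simp
        next
          case False
          then have "p^(j-w) dvd u + a*(t - t0)" using pow_cancel[OF p md] by blast
          then show ?thesis unfolding B_def using trange by simp
        qed
      qed
      have pjw: "p^(j-w) > 0" using pp by simp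
      have mdiv: "m div p^(j-w) = p^w"
      proof -
        have "m = p^(j-w) * p^w" unfolding m_def using wj by (simp add: power_add[symmetric])
        then show ?thesis using pjw by (metis less_irrefl nonzero_mult_div_cancel_left)
      qed
      have cA: "int (card A) \<le> p^w"
      proof -
        have "card A \<le> nat (m div p^(j-w))" unfolding A_def
          by (rule card_class_le[OF pjw]) (use mpos wj in \<open>simp_all add: m_def le_imp_power_dvd\<close>)
        then show ?thesis using mdiv pwpos by simp
      qed
      have cB: "int (card B) \<le> p^w * p^z"
      proof (cases "B = {}")
        case True then show ?thesis using pwpos pzpos by simp
      next
        case False
        then obtain t1 where t1: "t1 \<in> B" by blast
        define r where "r = (j - w) - z"
        have rj: "r \<le> j" unfolding r_def by simp
        have BC: "B \<subseteq> {t \<in> {0..<m}. p^r dvd t - t1}"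
        proof
          fix t assume tB: "t \<in> B"
          have h1: "p^(j-w) dvd u + a*(t - t0)" using tB unfolding B_def by simp
          have h2: "p^(j-w) dvd u + a*(t1 - t0)" using t1 unfolding B_def by simp
          have "p^(j-w) dvd (u + a*(t - t0)) - (u + a*(t1 - t0))" using h1 h2 by (rule dvd_diff)
          moreover have "(u + a*(t - t0)) - (u + a*(t1 - t0)) = a * (t - t1)" by (simp add: algebra_simps)
          ultimately have "p^(j-w) dvd a * (t - t1)" by simp
          then have "p^r dvd t - t1" unfolding r_def using pow_cancel[OF p _ npz_a] by blast
          then show "t \<in> {t \<in> {0..<m}. p^r dvd t - t1}" using tB unfolding B_def by simp
        qed
        have prpos: "p^r > 0" using pp by simp
        have "card B \<le> card {t \<in> {0..<m}. p^r dvd t - t1}" by (rule card_mono[OF _ BC]) (rule finite_subset[of _ "{0..<m}"], auto)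
        also have "\<dots> \<le> nat (m div p^r)"
          by (rule card_class_le[OF prpos]) (use mpos rj in \<open>simp_all add: m_def le_imp_power_dvd\<close>)
        finally have cb0: "card B \<le> nat (m div p^r)" .
        have "0 \<le> m div p^r" using mpos prpos by (simp add: pos_imp_zdiv_nonneg_iff)
        then have cb: "int (card B) \<le> m div p^r" using cb0 le_nat_iff by blast
        have "m = p^r * p^(j-r)" unfolding m_def using rj by (simp add: power_add[symmetric])
        then have "m div p^r = p^(j-r)" using prpos by (metis less_irrefl nonzero_mult_div_cancel_left)
        also have "\<dots> \<le> p^(w+z)" using pp unfolding r_def by (intro power_increasing) auto
        also have "\<dots> = p^w * p^z" by (simp add: power_add)
        finally show ?thesis using cb by simp
      qed
      have "card T \<le> card (A \<union> B)" by (rule card_mono[OF _ TAB]) (rule finite_subset[of _ "{0..<m}"], auto simp: A_def B_def)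
      also have "\<dots> \<le> card A + card B" by (rule card_Un_le)
      finally have "int (card T) \<le> int (card A) + int (card B)" by simp
      also have "\<dots> \<le> p^w + p^w * p^z" using cA cB by simp
      also have "\<dots> \<le> \<bar>\<Delta>\<bar> + \<bar>\<Delta>\<bar> * \<bar>a\<bar>"
        using pwle pzle pwpos pzpos by (intro add_mono mult_mono) auto
      also have "\<dots> = \<bar>\<Delta>\<bar> * (1 + \<bar>a\<bar>)" by (simp add: algebra_simps)
      finally show ?thesis unfolding T_def m_def \<Delta>_def .
    qed
  qed
qed



lemma qform_sub_id:
  "qform a b c y1 y2 - y2^2 * (a*t^2 + 2*b*t + c) = (y1 - t*y2) * (a*(y1 + t*y2) + 2*b*y2)"
  unfolding qform_def by algebra

lemma prim_count:
  fixes p a b c N :: int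
  assumes p: "prime p" and dN: "p^j dvd N" and N0: "N > 0"
  shows "card {(y1, y2). 0 \<le> y1 \<and> y1 < N \<and> 0 \<le> y2 \<and> y2 < N \<and> \<not> p dvd y2 \<and> p^j dvd qform a b c y1 y2}
     \<le> card {t \<in> {0..<p^j}. p^j dvd a*t^2 + 2*b*t + c} * card {y2 \<in> {0..<N}. \<not> p dvd y2} * nat (N div p^j)"
proof -
  define m where "m = p^j"
  define T where "T = {t \<in> {0..<m}. m dvd a*t^2 + 2*b*t + c}"
  define Y where "Y = {y2 \<in> {0..<N}. \<not> p dvd y2}"
  define S where "S = {(y1, y2). 0 \<le> y1 \<and> y1 < N \<and> 0 \<le> y2 \<and> y2 < N \<and> \<not> p dvd y2 \<and> m dvd qform a b c y1 y2}"
  define F where "F = (\<lambda>(t, y2). (\<lambda>y1. (y1, y2)) ` {y1 \<in> {0..<N}. m dvd y1 - t*y2})"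
  have pp: "p > 1" using p prime_gt_1_int by blast
  have mpos: "m > 0" unfolding m_def using pp by simp
  have finT: "finite T" unfolding T_def by (rule finite_subset[of _ "{0..<m}"]) auto
  have finY: "finite Y" unfolding Y_def by (rule finite_subset[of _ "{0..<N}"]) auto
  have sub: "S \<subseteq> (\<Union>i\<in>T \<times> Y. F i)"
  proof
    fix x assume xS: "x \<in> S"
    obtain y1 y2 where x: "x = (y1, y2)" by (cases x)
    have r1: "0 \<le> y1" "y1 < N" "0 \<le> y2" "y2 < N" and np: "\<not> p dvd y2"
      and q: "m dvd qform a b c y1 y2" using xS unfolding S_def x by auto
    have cp: "coprime p y2" using p np by (simp add: prime_imp_coprime)
    then have cm: "coprime y2 m" unfolding m_def by (simp add: coprime_commute)
    then obtain w where w: "[y2 * w = 1] (mod m)" using cong_solve_coprime_int by blast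
    define t where "t = (y1 * w) mod m"
    have t0: "0 \<le> t" "t < m" unfolding t_def using mpos by simp_all
    have "[t = y1 * w] (mod m)" unfolding t_def cong_def by simp
    then have "[t * y2 = y1 * w * y2] (mod m)" by (rule cong_mult) (rule cong_refl)
    moreover have "[y1 * (y2 * w) = y1 * 1] (mod m)" using w by (rule cong_mult[OF cong_refl])
    ultimately have "[t * y2 = y1] (mod m)" by (simp add: mult_ac cong_def)
    then have md: "m dvd y1 - t * y2" by (simp add: cong_iff_dvd_diff dvd_diff_commute)
    have "m dvd (y1 - t*y2) * (a*(y1 + t*y2) + 2*b*y2)" using md by (rule dvd_mult2)
    then have "m dvd qform a b c y1 y2 - y2^2 * (a*t^2 + 2*b*t + c)" by (simp only: qform_sub_id)
    then have "m dvd qform a b c y1 y2 - (qform a b c y1 y2 - y2^2 * (a*t^2 + 2*b*t + c))"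
      using q by (rule dvd_diff[rotated])
    then have "m dvd y2^2 * (a*t^2 + 2*b*t + c)" by simp
    moreover have "coprime m (y2^2)" using cm by (simp add: coprime_commute)
    ultimately have "m dvd a*t^2 + 2*b*t + c" by (simp add: coprime_dvd_mult_right_iff)
    then have tT: "t \<in> T" unfolding T_def using t0 by simp
    have y2Y: "y2 \<in> Y" unfolding Y_def using r1 np by simp
    have "x \<in> F (t, y2)" unfolding F_def x using r1 md by auto
    then show "x \<in> (\<Union>i\<in>T \<times> Y. F i)" using tT y2Y by blast
  qed
  have finF: "\<And>i. finite (F i)"
    unfolding F_def by (auto intro!: finite_imageI intro: finite_subset[of _ "{0..<N}"])
  have cF: "\<And>i. card (F i) \<le> nat (N div m)"
  proof -
    fix i :: "int \<times> int"
    obtain t y2 where i: "i = (t, y2)" by (cases i)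
    have "card (F i) \<le> card {y1 \<in> {0..<N}. m dvd y1 - t*y2}" unfolding F_def i prod.case
      by (rule card_image_le) (rule finite_subset[of _ "{0..<N}"], auto)
    also have "\<dots> \<le> nat (N div m)" using card_class_le[OF mpos _ dN[folded m_def]] N0 by simp
    finally show "card (F i) \<le> nat (N div m)" .
  qed
  have "card S \<le> card (\<Union>i\<in>T \<times> Y. F i)"
    by (rule card_mono[OF _ sub]) (use finT finY finF in auto)
  also have "\<dots> \<le> (\<Sum>i\<in>T \<times> Y. card (F i))" by (rule card_UN_le) (use finT finY in auto)
  also have "\<dots> \<le> card (T \<times> Y) * nat (N div m)" using sum_bounded_above[of "T \<times> Y" "\<lambda>i. card (F i)" "nat (N div m)"] cF by simp
  also have "\<dots> = card T * card Y * nat (N div m)" by (simp add: card_cartesian_product)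
  finally show ?thesis unfolding S_def T_def Y_def m_def .
qed



lemma qform_scale: "qform a b c (d*y1) (d*y2) = d^2 * qform a b c y1 y2"
  unfolding qform_def by algebra

lemma qform_swap: "qform a b c y1 y2 = qform c b a y2 y1"
  unfolding qform_def by algebra

lemma disc_swap: "disc_form c b a = disc_form a b c"
  unfolding disc_form_def by algebra

lemma card_sq_range:
  fixes N :: int
  assumes "N \<ge> 0"
  shows "int (card {y \<in> {0..<N}. P y}) \<le> N"
proof -
  have "card {y \<in> {0..<N}. P y} \<le> card {0..<N}" by (rule card_mono) auto
  then show ?thesis using assms by simp
qed

lemma nat_int_bound:
  assumes "x \<le> a * b * nat q" "q \<ge> 0"
  shows "int x \<le> int a * int b * q"
proof -
  have "int x \<le> int (a * b * nat q)" using assms(1) by (rule of_nat_mono)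
  also have "\<dots> = int a * int b * q" using assms(2) by simp
  finally show ?thesis .
qed

lemma prim_bound:
  fixes p a b c N :: int
  assumes p: "prime p" and a0: "a \<noteq> 0" and D0: "disc_form a b c \<noteq> 0"
    and jn: "j \<le> n"
  shows "int (card {(y1, y2). 0 \<le> y1 \<and> y1 < p^n \<and> 0 \<le> y2 \<and> y2 < p^n \<and> \<not> p dvd y2 \<and> p^j dvd qform a b c y1 y2})
     \<le> \<bar>disc_form a b c\<bar> * (1 + \<bar>a\<bar>) * p^(2*n - j)"
proof -
  have pp: "p > 1" using p prime_gt_1_int by blast
  have Npos: "p^n > 0" using pp by simp
  have pjpos: "p^j > 0" using pp by simp
  have dN: "p^j dvd p^n" using jn by (simp add: le_imp_power_dvd)
  have e: "p^n = p^j * p^(n-j)" using jn by (simp add: power_add[symmetric])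
  have ndiv: "p^n div p^j = p^(n-j)" using e pjpos by (metis less_irrefl nonzero_mult_div_cancel_left)
  have c1: "int (card {t \<in> {0..<p^j}. p^j dvd a*t^2 + 2*b*t + c}) \<le> \<bar>disc_form a b c\<bar> * (1 + \<bar>a\<bar>)"
    by (rule root_count[OF p a0 D0])
  have c2: "int (card {y2 \<in> {0..<p^n}. \<not> p dvd y2}) \<le> p^n" using Npos by (intro card_sq_range) simp
  have "card {(y1, y2). 0 \<le> y1 \<and> y1 < p^n \<and> 0 \<le> y2 \<and> y2 < p^n \<and> \<not> p dvd y2 \<and> p^j dvd qform a b c y1 y2}
     \<le> card {t \<in> {0..<p^j}. p^j dvd a*t^2 + 2*b*t + c} * card {y2 \<in> {0..<p^n}. \<not> p dvd y2} * nat (p^n div p^j)"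
    by (rule prim_count[OF p dN Npos])
  then have "int (card {(y1, y2). 0 \<le> y1 \<and> y1 < p^n \<and> 0 \<le> y2 \<and> y2 < p^n \<and> \<not> p dvd y2 \<and> p^j dvd qform a b c y1 y2})
     \<le> int (card {t \<in> {0..<p^j}. p^j dvd a*t^2 + 2*b*t + c}) * int (card {y2 \<in> {0..<p^n}. \<not> p dvd y2}) * p^(n-j)"
    unfolding ndiv using pp by (intro nat_int_bound) simp_all
  also have "\<dots> \<le> (\<bar>disc_form a b c\<bar> * (1 + \<bar>a\<bar>)) * p^n * p^(n-j)"
    using c1 c2 pp by (intro mult_right_mono mult_mono) auto
  also have "\<dots> = \<bar>disc_form a b c\<bar> * (1 + \<bar>a\<bar>) * p^(2*n - j)"
  proof -
    have "n + (n - j) = 2*n - j" using jn by simp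
    then show ?thesis by (simp add: power_add[symmetric] mult.assoc)
  qed
  finally show ?thesis .
qed

lemma Xk_bound:
  fixes p a b c :: int
  assumes p: "prime p" and a0: "a \<noteq> 0" and c0: "c \<noteq> 0" and D0: "disc_form a b c \<noteq> 0"
    and kM: "2*k \<le> M" and ME: "M \<le> E"
  shows "int (card {(x1, x2). 0 \<le> x1 \<and> x1 < p^E \<and> 0 \<le> x2 \<and> x2 < p^E \<and> p^k dvd x1 \<and> p^k dvd x2 \<and>
            \<not> (p^(k+1) dvd x1 \<and> p^(k+1) dvd x2) \<and> p^M dvd qform a b c x1 x2})
     \<le> (\<bar>disc_form a b c\<bar> * (1 + \<bar>a\<bar>) + \<bar>disc_form a b c\<bar> * (1 + \<bar>c\<bar>)) * p^(2*E - M)"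
proof -
  define n where "n = E - k"
  define j where "j = M - 2*k"
  have jn: "j \<le> n" unfolding j_def n_def using kM ME by simp
  have ex: "2*n - j = 2*E - M" unfolding j_def n_def using kM ME by simp
  have pp: "p > 1" using p prime_gt_1_int by blast
  define X where "X = {(x1, x2). 0 \<le> x1 \<and> x1 < p^E \<and> 0 \<le> x2 \<and> x2 < p^E \<and> p^k dvd x1 \<and> p^k dvd x2 \<and>
            \<not> (p^(k+1) dvd x1 \<and> p^(k+1) dvd x2) \<and> p^M dvd qform a b c x1 x2}"
  define Y2 where "Y2 = {(y1, y2). 0 \<le> y1 \<and> y1 < p^n \<and> 0 \<le> y2 \<and> y2 < p^n \<and> \<not> p dvd y2 \<and> p^j dvd qform a b c y1 y2}"
  define Y1s where "Y1s = {(y1, y2). 0 \<le> y1 \<and> y1 < p^n \<and> 0 \<le> y2 \<and> y2 < p^n \<and> \<not> p dvd y2 \<and> p^j dvd qform c b a y1 y2}"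
  define sc where "sc = (\<lambda>(y1::int, y2::int). (p^k * y1, p^k * y2))"
  have fin2: "finite Y2" unfolding Y2_def
    by (rule finite_subset[of _ "{0..<p^n} \<times> {0..<p^n}"]) auto
  have fin1: "finite Y1s" unfolding Y1s_def
    by (rule finite_subset[of _ "{0..<p^n} \<times> {0..<p^n}"]) auto
  have sub: "X \<subseteq> sc ` (prod.swap ` Y1s \<union> Y2)"
  proof
    fix x assume xX: "x \<in> X"
    obtain x1 x2 where x: "x = (x1, x2)" by (cases x)
    have r: "0 \<le> x1" "x1 < p^E" "0 \<le> x2" "x2 < p^E" and d1: "p^k dvd x1" and d2: "p^k dvd x2"
      and nd: "\<not> (p^(k+1) dvd x1 \<and> p^(k+1) dvd x2)" and q: "p^M dvd qform a b c x1 x2"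
      using xX unfolding X_def x by auto
    define y1 where "y1 = x1 div p^k"
    define y2 where "y2 = x2 div p^k"
    have pk: "p^k > 0" using pp by simp
    have x1e: "x1 = p^k * y1" unfolding y1_def using d1 by simp
    have x2e: "x2 = p^k * y2" unfolding y2_def using d2 by simp
    have ry: "0 \<le> y1" "y1 < p^n" "0 \<le> y2" "y2 < p^n"
    proof -
      have En: "p^E = p^k * p^n" unfolding n_def using kM ME by (simp add: power_add[symmetric])
      show "0 \<le> y1" using r(1) pk x1e by (simp add: zero_le_mult_iff)
      show "0 \<le> y2" using r(3) pk x2e by (simp add: zero_le_mult_iff)
      show "y1 < p^n" using r(2) pk x1e En by (metis mult_less_cancel_left_pos)
      show "y2 < p^n" using r(4) pk x2e En by (metis mult_less_cancel_left_pos)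
    qed
    have prim: "\<not> p dvd y1 \<or> \<not> p dvd y2"
    proof (rule ccontr)
      assume "\<not> (\<not> p dvd y1 \<or> \<not> p dvd y2)"
      then have "p dvd y1" "p dvd y2" by auto
      then have "p^k * p dvd x1" "p^k * p dvd x2" unfolding x1e x2e by (auto intro: mult_dvd_mono)
      then show False using nd by (simp add: mult.commute)
    qed
    have "p^M dvd p^k * p^k * qform a b c y1 y2"
      using q unfolding x1e x2e qform_scale by (simp add: power2_eq_square)
    moreover have "p^M = p^k * p^k * p^j" unfolding j_def using kM by (simp add: power_add[symmetric])
    ultimately have h: "(p^k * p^k) * p^j dvd (p^k * p^k) * qform a b c y1 y2" by (simp add: mult.assoc)
    have pn0: "p \<noteq> 0" using pp by simp
    have pkk: "p^k * p^k \<noteq> 0" using pn0 by simp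
    have qj: "p^j dvd qform a b c y1 y2" using h pkk dvd_mult_cancel_left by blast
    have "(y1, y2) \<in> prod.swap ` Y1s \<union> Y2"
    proof (cases "p dvd y2")
      case False
      then show ?thesis unfolding Y2_def by (simp add: ry qj)
    next
      case True
      then have "\<not> p dvd y1" using prim by blast
      moreover have "p^j dvd qform c b a y2 y1" using qj qform_swap[of a b c y1 y2] by simp
      ultimately have "(y2, y1) \<in> Y1s" unfolding Y1s_def by (simp add: ry)
      then have "prod.swap (y2, y1) \<in> prod.swap ` Y1s" by (rule imageI)
      then show ?thesis by simp
    qed
    moreover have "x = sc (y1, y2)" unfolding sc_def x using x1e x2e by simp
    ultimately show "x \<in> sc ` (prod.swap ` Y1s \<union> Y2)" by blast
  qed
  have "card X \<le> card (sc ` (prod.swap ` Y1s \<union> Y2))"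
    by (rule card_mono[OF _ sub]) (use fin1 fin2 in auto)
  also have "\<dots> \<le> card (prod.swap ` Y1s \<union> Y2)" by (rule card_image_le) (use fin1 fin2 in auto)
  also have "\<dots> \<le> card (prod.swap ` Y1s) + card Y2" by (rule card_Un_le)
  also have "\<dots> \<le> card Y1s + card Y2" using card_image_le[OF fin1, of prod.swap] by simp
  finally have cX: "int (card X) \<le> int (card Y1s) + int (card Y2)" by simp
  have b2: "int (card Y2) \<le> \<bar>disc_form a b c\<bar> * (1 + \<bar>a\<bar>) * p^(2*E - M)"
    unfolding Y2_def ex[symmetric] by (rule prim_bound[OF p a0 D0 jn])
  have D0': "disc_form c b a \<noteq> 0" using D0 disc_swap by simp
  have b1': "int (card Y1s) \<le> \<bar>disc_form c b a\<bar> * (1 + \<bar>c\<bar>) * p^(2*E - M)"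
    unfolding Y1s_def ex[symmetric] by (rule prim_bound[OF p c0 D0' jn])
  have b1: "int (card Y1s) \<le> \<bar>disc_form a b c\<bar> * (1 + \<bar>c\<bar>) * p^(2*E - M)"
    using b1' disc_swap[of a b c] by simp
  have "int (card X) \<le> \<bar>disc_form a b c\<bar> * (1 + \<bar>c\<bar>) * p^(2*E - M) + \<bar>disc_form a b c\<bar> * (1 + \<bar>a\<bar>) * p^(2*E - M)"
    using cX b1 b2 by linarith
  then show ?thesis unfolding X_def by (simp only: distrib_right add.commute)
qed



lemma pow_div_scaled:
  fixes p a b c x1 x2 y1 y2 :: int
  assumes p: "prime p" and x1: "x1 = p^k * y1" and x2: "x2 = p^k * y2"
    and q: "p^m dvd qform a b c x1 x2" and km: "2*k \<le> m"
  shows "p^(m - 2*k) dvd qform a b c y1 y2"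
proof -
  have pp: "p > 1" using p prime_gt_1_int by blast
  have "p^m dvd p^k * p^k * qform a b c y1 y2"
    using q unfolding x1 x2 qform_scale by (simp add: power2_eq_square)
  moreover have "p^m = p^k * p^k * p^(m - 2*k)" using km by (simp add: power_add[symmetric])
  ultimately have h: "(p^k * p^k) * p^(m-2*k) dvd (p^k * p^k) * qform a b c y1 y2" by (simp add: mult.assoc)
  have pn0: "p \<noteq> 0" using pp by simp
  have pkk: "p^k * p^k \<noteq> 0" using pn0 by simp
  show ?thesis using h pkk dvd_mult_cancel_left by blast
qed

lemma Kset_card:
  fixes M s K Rb :: nat
  assumes "K = (M + 1) div 2" "s \<le> M"
  shows "card {k. k < K \<and> s \<le> 2*k + Rb} \<le> (Rb + 2) * (M - s + 1)"
proof -
  have "{k. k < K \<and> s \<le> 2*k + Rb} \<subseteq> {(s - Rb) div 2..<K}"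
  proof
    fix k assume "k \<in> {k. k < K \<and> s \<le> 2*k + Rb}"
    then have k: "k < K" "s - Rb \<le> 2*k" by auto
    then have "(s - Rb) div 2 \<le> (2*k) div 2" by (intro div_le_mono)
    then show "k \<in> {(s - Rb) div 2..<K}" using k by simp
  qed
  then have "card {k. k < K \<and> s \<le> 2*k + Rb} \<le> card {(s - Rb) div 2..<K}"
    by (intro card_mono) auto
  also have "\<dots> = K - (s - Rb) div 2" by simp
  also have "\<dots> \<le> M - s + Rb + 1"
  proof -
    have h1: "2 * ((M+1) div 2) + (M+1) mod 2 = M + 1" by simp
    have h2: "2 * ((s - Rb) div 2) + (s - Rb) mod 2 = s - Rb" by simp
    have h3: "(s - Rb) mod 2 < 2" by simp
    show ?thesis using h1 h2 h3 assms by linarith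
  qed
  also have "\<dots> \<le> (Rb + 2) * (M - s + 1)" by (simp add: algebra_simps)
  finally show ?thesis .
qed

lemma pow_gt_nat:
  fixes p :: int
  assumes "p > 1"
  shows "int n < p^n"
proof -
  have "n < 2^n" by (rule less_exp)
  then have "int n < int (2^n)" by simp
  then have "int n < 2^n" by simp
  also have "(2::int)^n \<le> p^n" using assms by (intro power_mono) auto
  finally show ?thesis .
qed

lemma main_bound:
  fixes p a1 b1 c1 a2 b2 c2 Kf :: int and E M s Rb :: nat
  assumes p: "prime p" and a0: "a1 \<noteq> 0" and c0: "c1 \<noteq> 0" and D0: "disc_form a1 b1 c1 \<noteq> 0"
    and R0: "res_form a1 b1 c1 a2 b2 c2 \<noteq> 0" and Rb: "\<bar>res_form a1 b1 c1 a2 b2 c2\<bar> \<le> int Rb"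
    and Kf: "\<bar>disc_form a1 b1 c1\<bar> * (1 + \<bar>a1\<bar>) + \<bar>disc_form a1 b1 c1\<bar> * (1 + \<bar>c1\<bar>) \<le> Kf"
    and sM: "s \<le> M" and ME: "M \<le> E"
  shows "int (card {(x1, x2). 0 \<le> x1 \<and> x1 < p^E \<and> 0 \<le> x2 \<and> x2 < p^E \<and>
            p^M dvd qform a1 b1 c1 x1 x2 \<and> p^s dvd qform a2 b2 c2 x1 x2})
     \<le> (1 + (int Rb + 2) * Kf) * int (M - s + 1) * p^(2*E - M)"
proof -
  have pp: "p > 1" using p prime_gt_1_int by blast
  define K where "K = (M + 1) div 2"
  have KM: "K \<le> M" unfolding K_def by linarith
  have MK: "M \<le> 2*K" unfolding K_def by linarith
  define S where "S = {(x1, x2). 0 \<le> x1 \<and> x1 < p^E \<and> 0 \<le> x2 \<and> x2 < p^E \<and>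
            p^M dvd qform a1 b1 c1 x1 x2 \<and> p^s dvd qform a2 b2 c2 x1 x2}"
  define Z where "Z = {(x1, x2). 0 \<le> x1 \<and> x1 < p^E \<and> 0 \<le> x2 \<and> x2 < p^E \<and> p^K dvd x1 \<and> p^K dvd x2}"
  define X where "X = (\<lambda>k. {(x1, x2). 0 \<le> x1 \<and> x1 < p^E \<and> 0 \<le> x2 \<and> x2 < p^E \<and> p^k dvd x1 \<and> p^k dvd x2 \<and>
            \<not> (p^(k+1) dvd x1 \<and> p^(k+1) dvd x2) \<and> p^M dvd qform a1 b1 c1 x1 x2})"
  define KS where "KS = {k. k < K \<and> s \<le> 2*k + Rb}"
  define P where "P = p^(2*E - M)"
  have Ppos: "P > 0" unfolding P_def using pp by simp
  have finKS: "finite KS" unfolding KS_def by simp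
  have finZ: "finite Z" unfolding Z_def
    by (rule finite_subset[of _ "{0..<p^E} \<times> {0..<p^E}"]) auto
  have finX: "\<And>k. finite (X k)" unfolding X_def
    by (rule finite_subset[of _ "{0..<p^E} \<times> {0..<p^E}"]) auto
  have cover: "S \<subseteq> Z \<union> (\<Union>k\<in>KS. X k)"
  proof
    fix x assume xS: "x \<in> S"
    obtain x1 x2 where x: "x = (x1, x2)" by (cases x)
    have r: "0 \<le> x1" "x1 < p^E" "0 \<le> x2" "x2 < p^E"
      and qf: "p^M dvd qform a1 b1 c1 x1 x2" and qh: "p^s dvd qform a2 b2 c2 x1 x2"
      using xS unfolding S_def x by auto
    show "x \<in> Z \<union> (\<Union>k\<in>KS. X k)"
    proof (cases "x \<in> Z")
      case True then show ?thesis by blast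
    next
      case notZ: False
      define A where "A = {k. k \<le> K \<and> p^k dvd x1 \<and> p^k dvd x2}"
      have finA: "finite A" unfolding A_def by (rule finite_subset[of _ "{..K}"]) auto
      have A0: "0 \<in> A" unfolding A_def by simp
      define k0 where "k0 = Max A"
      have k0A: "k0 \<in> A" unfolding k0_def using finA A0 by (intro Max_in) auto
      then have k0K: "k0 \<le> K" and d1: "p^k0 dvd x1" and d2: "p^k0 dvd x2" unfolding A_def by auto
      have k0ne: "k0 \<noteq> K"
      proof
        assume "k0 = K"
        then have "x \<in> Z" unfolding Z_def x using r d1 d2 by simp
        then show False using notZ by simp
      qed
      then have k0lt: "k0 < K" using k0K by simp
      have nd: "\<not> (p^(k0+1) dvd x1 \<and> p^(k0+1) dvd x2)"
      proof
        assume "p^(k0+1) dvd x1 \<and> p^(k0+1) dvd x2"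
        then have "k0 + 1 \<in> A" unfolding A_def using k0lt by simp
        then have "k0 + 1 \<le> k0" unfolding k0_def by (rule Max_ge[OF finA])
        then show False by simp
      qed
      have k0M: "2*k0 \<le> M" using k0lt unfolding K_def by linarith
      have sk: "s \<le> 2*k0 + Rb"
      proof (rule ccontr)
        assume "\<not> s \<le> 2*k0 + Rb"
        then have lt: "Rb < s - 2*k0" and sk0: "2*k0 \<le> s" by auto
        define y1 where "y1 = x1 div p^k0"
        define y2 where "y2 = x2 div p^k0"
        have x1e: "x1 = p^k0 * y1" unfolding y1_def using d1 by simp
        have x2e: "x2 = p^k0 * y2" unfolding y2_def using d2 by simp
        have prim: "\<not> p dvd y1 \<or> \<not> p dvd y2"
        proof (rule ccontr)
          assume "\<not> (\<not> p dvd y1 \<or> \<not> p dvd y2)"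
          then have "p dvd y1" "p dvd y2" by auto
          then have "p^k0 * p dvd x1" "p^k0 * p dvd x2" unfolding x1e x2e by (auto intro: mult_dvd_mono)
          then show False using nd by (simp add: mult.commute)
        qed
        have f1: "p^(M - 2*k0) dvd qform a1 b1 c1 y1 y2" by (rule pow_div_scaled[OF p x1e x2e qf k0M])
        have h1: "p^(s - 2*k0) dvd qform a2 b2 c2 y1 y2" by (rule pow_div_scaled[OF p x1e x2e qh sk0])
        have "p^(s - 2*k0) dvd p^(M - 2*k0)" using sM by (intro le_imp_power_dvd) simp
        then have f2: "p^(s - 2*k0) dvd qform a1 b1 c1 y1 y2" using f1 by (rule dvd_trans)
        have "p^(s - 2*k0) dvd res_form a1 b1 c1 a2 b2 c2" by (rule res_prim[OF p prim f2 h1])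
        then have "p^(s - 2*k0) \<le> \<bar>res_form a1 b1 c1 a2 b2 c2\<bar>"
          using R0 pp by (intro dvd_abs_le) auto
        moreover have "int (s - 2*k0) < p^(s - 2*k0)" using pp by (rule pow_gt_nat)
        ultimately show False using Rb lt by linarith
      qed
      have "x \<in> X k0" unfolding X_def x using r d1 d2 nd qf by simp
      moreover have "k0 \<in> KS" unfolding KS_def using k0lt sk by simp
      ultimately show ?thesis by blast
    qed
  qed
  have "card S \<le> card (Z \<union> (\<Union>k\<in>KS. X k))"
    by (rule card_mono[OF _ cover]) (use finZ finX finKS in auto)
  also have "\<dots> \<le> card Z + card (\<Union>k\<in>KS. X k)" by (rule card_Un_le)
  also have "\<dots> \<le> card Z + (\<Sum>k\<in>KS. card (X k))" using card_UN_le[OF finKS, of X] by simp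
  finally have c00: "card S \<le> card Z + (\<Sum>k\<in>KS. card (X k))" .
  have c0': "int (card S) \<le> int (card Z) + (\<Sum>k\<in>KS. int (card (X k)))"
    using c00 by (metis of_nat_add of_nat_le_iff of_nat_sum)
  have cZ: "int (card Z) \<le> P"
  proof -
    define Z1 where "Z1 = {t \<in> {0..<p^E}. p^K dvd t - 0}"
    have pKpos: "p^K > 0" using pp by simp
    have KE: "K \<le> E" using KM ME by simp
    have eE: "p^E = p^K * p^(E-K)" using KE by (simp add: power_add[symmetric])
    have "card Z1 \<le> nat (p^E div p^K)" unfolding Z1_def
      by (rule card_class_le[OF pKpos]) (use pp eE in simp_all)
    moreover have "p^E div p^K = p^(E-K)" using eE pKpos by (metis less_irrefl nonzero_mult_div_cancel_left)
    moreover have "p^(E-K) \<ge> 0" using pp by simp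
    ultimately have cZ1: "int (card Z1) \<le> p^(E-K)" using le_nat_iff by metis
    have "Z \<subseteq> Z1 \<times> Z1" unfolding Z_def Z1_def by auto
    then have "card Z \<le> card (Z1 \<times> Z1)"
    proof (rule card_mono[rotated])
      have "finite Z1" unfolding Z1_def by (rule finite_subset[of _ "{0..<p^E}"]) auto
      then show "finite (Z1 \<times> Z1)" by simp
    qed
    then have "int (card Z) \<le> int (card Z1) * int (card Z1)"
      by (metis card_cartesian_product of_nat_le_iff of_nat_mult)
    also have "\<dots> \<le> p^(E-K) * p^(E-K)" using cZ1 by (intro mult_mono) auto
    also have "\<dots> = p^(2*E - 2*K)" using KE by (simp add: power_add[symmetric] mult_2)
    also have "\<dots> \<le> P" unfolding P_def using pp MK by (intro power_increasing) auto
    finally show ?thesis .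
  qed
  have cX: "\<And>k. k \<in> KS \<Longrightarrow> int (card (X k)) \<le> Kf * P"
  proof -
    fix k assume "k \<in> KS"
    then have "k < K" unfolding KS_def by simp
    then have kM: "2*k \<le> M" unfolding K_def by linarith
    have "int (card (X k)) \<le> (\<bar>disc_form a1 b1 c1\<bar> * (1 + \<bar>a1\<bar>) + \<bar>disc_form a1 b1 c1\<bar> * (1 + \<bar>c1\<bar>)) * P"
      unfolding X_def P_def by (rule Xk_bound[OF p a0 c0 D0 kM ME])
    also have "\<dots> \<le> Kf * P" using Kf Ppos by (intro mult_right_mono) auto
    finally show "int (card (X k)) \<le> Kf * P" .
  qed
  have "(\<Sum>k\<in>KS. int (card (X k))) \<le> (\<Sum>k\<in>KS. Kf * P)" using cX by (rule sum_mono)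
  also have "\<dots> = int (card KS) * (Kf * P)" by simp
  finally have cS: "int (card S) \<le> P + int (card KS) * (Kf * P)" using c0' cZ by linarith
  have KSc: "card KS \<le> (Rb + 2) * (M - s + 1)" unfolding KS_def by (rule Kset_card[OF K_def sM])
  have Kf0: "Kf \<ge> 0" using Kf by (smt (verit) abs_ge_zero mult_nonneg_nonneg)
  have "int (card KS) * (Kf * P) \<le> int ((Rb + 2) * (M - s + 1)) * (Kf * P)"
  proof (rule mult_right_mono)
    show "int (card KS) \<le> int ((Rb + 2) * (M - s + 1))" using KSc by (simp only: of_nat_le_iff)
    show "0 \<le> Kf * P" using Kf0 Ppos by simp
  qed
  then have h1: "int (card S) \<le> P + int ((Rb + 2) * (M - s + 1)) * (Kf * P)" using cS by linarith
  have eq: "int ((Rb + 2) * (M - s + 1)) = (int Rb + 2) * int (M - s + 1)" by (simp only: of_nat_mult of_nat_add) simp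
  have eq2: "(1 + (int Rb + 2) * Kf) * int (M - s + 1) * P = int (M - s + 1) * P + (int Rb + 2) * int (M - s + 1) * (Kf * P)"
    by (simp add: algebra_simps)
  have "P \<le> int (M - s + 1) * P" using Ppos by simp
  then have "int (card S) \<le> (1 + (int Rb + 2) * Kf) * int (M - s + 1) * P"
    using h1 unfolding eq eq2 by linarith
  then show ?thesis unfolding S_def P_def .
qed



lemma gcd_prime_pow_iff:
  fixes q x1 x2 :: int
  assumes q: "prime q" and g: "g \<ge> 1"
  shows "gcd (gcd x1 x2) (q^g) = 1 \<longleftrightarrow> \<not> (q dvd x1 \<and> q dvd x2)"
proof -
  have "gcd (gcd x1 x2) (q^g) = 1 \<longleftrightarrow> coprime (gcd x1 x2) (q^g)" by (simp add: coprime_iff_gcd_eq_1)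
  also have "\<dots> \<longleftrightarrow> coprime (gcd x1 x2) q" using g by (simp add: coprime_power_right_iff)
  also have "\<dots> \<longleftrightarrow> \<not> q dvd gcd x1 x2"
  proof
    assume cp: "coprime (gcd x1 x2) q"
    show "\<not> q dvd gcd x1 x2"
    proof
      assume "q dvd gcd x1 x2"
      then have "is_unit q" using coprime_common_divisor[OF cp _ dvd_refl] by blast
      then show False using q not_prime_unit by blast
    qed
  next
    assume "\<not> q dvd gcd x1 x2"
    then have "coprime q (gcd x1 x2)" by (rule prime_imp_coprime[OF q])
    then show "coprime (gcd x1 x2) q" by (rule coprime_commute[THEN iffD1])
  qed
  also have "\<dots> \<longleftrightarrow> \<not> (q dvd x1 \<and> q dvd x2)" by simp
  finally show ?thesis .
qed

lemma qform_dvd_both: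
  fixes q x1 x2 :: int
  assumes "q dvd x1" "q dvd x2"
  shows "q dvd qform a b c x1 x2"
proof -
  have "q dvd a * x1^2" using assms(1) by (simp add: power2_eq_square)
  moreover have "q dvd 2 * b * x1 * x2" using assms(2) by simp
  moreover have "q dvd c * x2^2" using assms(2) by (simp add: power2_eq_square)
  ultimately show ?thesis unfolding qform_def by (intro dvd_add)
qed

lemma small_dvd_zero:
  fixes q x :: int
  assumes "0 \<le> x" "x < q" "q dvd x"
  shows "x = 0"
proof (rule ccontr)
  assume "x \<noteq> 0"
  then have "q \<le> x" using assms by (intro zdvd_imp_le) auto
  then show False using assms by simp
qed

lemma small_dvd_eq:
  fixes q x y :: int
  assumes "0 \<le> x" "x < q" "0 \<le> y" "y < q" "q dvd x - y"
  shows "x = y"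
proof (rule ccontr)
  assume "x \<noteq> y"
  then have "x - y \<noteq> 0" by simp
  then have "\<bar>q\<bar> \<le> \<bar>x - y\<bar>" using assms(5) by (rule dvd_imp_le_int)
  then show False using assms by linarith
qed

lemma prod_const_p:
  "(\<Prod>i\<in>{1..g}. int p) = int p ^ g"
  by (simp add: prod_constant)

lemma finite_box:
  "finite {(x1::int, x2::int). 0 \<le> x1 \<and> x1 < P \<and> 0 \<le> x2 \<and> x2 < P \<and> Q x1 x2}"
  by (rule finite_subset[of _ "{0..<P} \<times> {0..<P}"]) auto

lemma claim2:
  fixes p :: nat and g :: nat
  assumes p: "prime p" and g: "g \<ge> 1"
  shows "rho g a b c (\<lambda>i. p) = rho_star g a b c (\<lambda>i. p) + p^(2*(g-1))"
proof -
  define q where "q = int p"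
  have q: "prime q" unfolding q_def using p by simp
  have qq: "q > 1" using q prime_gt_1_int by blast
  define P where "P = q^g"
  have Pe: "P = q * q^(g-1)" unfolding P_def using g by (simp add: power_eq_if)
  define S where "S = {(x1::int, x2::int). 0 \<le> x1 \<and> x1 < P \<and> 0 \<le> x2 \<and> x2 < P \<and>
              (\<forall>i\<in>{1..g}. q dvd qform (a i) (b i) (c i) x1 x2)}"
  define Ss where "Ss = {(x1::int, x2::int). 0 \<le> x1 \<and> x1 < P \<and> 0 \<le> x2 \<and> x2 < P \<and>
              (\<forall>i\<in>{1..g}. q dvd qform (a i) (b i) (c i) x1 x2) \<and> gcd (gcd x1 x2) P = 1}"
  define Z1 where "Z1 = {t. 0 \<le> t \<and> t < P \<and> q dvd t}"
  define Z where "Z = Z1 \<times> Z1"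
  have rS: "rho g a b c (\<lambda>i. p) = card S"
    unfolding rho_def S_def P_def q_def Let_def prod_const_p by (rule refl)
  have rSs: "rho_star g a b c (\<lambda>i. p) = card Ss"
    unfolding rho_star_def Ss_def P_def q_def Let_def prod_const_p by (rule refl)
  have finS: "finite Ss" unfolding Ss_def by (rule finite_box)
  have finZ1: "finite Z1" unfolding Z1_def
    by (rule finite_subset[of _ "{0..<P}"]) auto
  have finZ: "finite Z" unfolding Z_def using finZ1 by simp
  have key: "\<And>x1 x2. gcd (gcd x1 x2) P = 1 \<longleftrightarrow> \<not> (q dvd x1 \<and> q dvd x2)"
    unfolding P_def by (rule gcd_prime_pow_iff[OF q g])
  have SU: "S = Ss \<union> Z"
  proof (rule set_eqI)
    fix x :: "int \<times> int"
    obtain x1 x2 where x: "x = (x1, x2)" by (cases x)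
    have "x \<in> Ss \<longleftrightarrow> x \<in> S \<and> \<not> (q dvd x1 \<and> q dvd x2)"
      unfolding S_def Ss_def x key by (simp only: mem_Collect_eq case_prod_conv conj_assoc)
    moreover have "x \<in> Z \<longleftrightarrow> 0 \<le> x1 \<and> x1 < P \<and> 0 \<le> x2 \<and> x2 < P \<and> q dvd x1 \<and> q dvd x2"
      unfolding Z_def Z1_def x by (simp only: mem_Collect_eq mem_Times_iff fst_conv snd_conv conj_assoc conj_comms)
    moreover have "q dvd x1 \<and> q dvd x2 \<Longrightarrow> (\<forall>i\<in>{1..g}. q dvd qform (a i) (b i) (c i) x1 x2)"
      using qform_dvd_both[of q x1 x2] by blast
    moreover have "x \<in> S \<longleftrightarrow> 0 \<le> x1 \<and> x1 < P \<and> 0 \<le> x2 \<and> x2 < P \<and> (\<forall>i\<in>{1..g}. q dvd qform (a i) (b i) (c i) x1 x2)"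
      unfolding S_def x by (simp only: mem_Collect_eq case_prod_conv)
    ultimately show "x \<in> S \<longleftrightarrow> x \<in> Ss \<union> Z" unfolding Un_iff by meson
  qed
  have dj: "Ss \<inter> Z = {}"
  proof -
    have "x \<notin> Z" if xs: "x \<in> Ss" for x
    proof -
      obtain x1 x2 where x: "x = (x1, x2)" by (cases x)
      have "0 \<le> x1 \<and> x1 < P \<and> 0 \<le> x2 \<and> x2 < P \<and> (\<forall>i\<in>{1..g}. q dvd qform (a i) (b i) (c i) x1 x2) \<and> gcd (gcd x1 x2) P = 1"
        using xs unfolding Ss_def x by (simp only: mem_Collect_eq case_prod_conv) blast
      then have "gcd (gcd x1 x2) P = 1" by (elim conjE)
      then have nd: "\<not> (q dvd x1 \<and> q dvd x2)" by (rule key[THEN iffD1])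
      show "x \<notin> Z"
      proof
        assume "x \<in> Z"
        then have "q dvd x1 \<and> q dvd x2" unfolding Z_def Z1_def x
          by (simp only: mem_Times_iff mem_Collect_eq fst_conv snd_conv)
        then show False using nd by contradiction
      qed
    qed
    then show ?thesis by blast
  qed
  have cZ1: "card Z1 = p^(g-1)"
  proof -
    have "Z1 = (\<lambda>u. q * u) ` {0..<q^(g-1)}"
    proof (rule set_eqI)
      fix t
      show "t \<in> Z1 \<longleftrightarrow> t \<in> (\<lambda>u. q * u) ` {0..<q^(g-1)}"
      proof
        assume "t \<in> Z1"
        then have t: "0 \<le> t" "t < P" "q dvd t" unfolding Z1_def by auto
        then obtain u where u: "t = q * u" by (elim dvdE)
        have "0 \<le> u" using t(1) u qq by (simp add: zero_le_mult_iff)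
        moreover have "q * u < q * q^(g-1)" using t(2) u Pe by simp
        then have "u < q^(g-1)" using qq by (simp add: mult_less_cancel_left_pos)
        ultimately show "t \<in> (\<lambda>u. q * u) ` {0..<q^(g-1)}" using u by auto
      next
        assume "t \<in> (\<lambda>u. q * u) ` {0..<q^(g-1)}"
        then obtain u where u: "t = q * u" "u \<in> {0..<q^(g-1)}" by blast
        then have u: "t = q * u" "0 \<le> u" "u < q^(g-1)" by simp_all
        have "q * u < q * q^(g-1)" using u qq by simp
        then show "t \<in> Z1" unfolding Z1_def using u qq Pe by simp
      qed
    qed
    moreover have "inj_on (\<lambda>u. q * u) {0..<q^(g-1)}" using qq by (intro inj_onI) simp
    ultimately have "card Z1 = card {0..<q^(g-1)}" by (simp add: card_image)
    also have "\<dots> = nat (q^(g-1))" by simp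
    also have "\<dots> = p^(g-1)" unfolding q_def by (simp add: nat_power_eq)
    finally show ?thesis .
  qed
  have "card S = card Ss + card Z" unfolding SU using finS finZ dj by (rule card_Un_disjoint)
  also have "card Z = p^(2*(g-1))" unfolding Z_def card_cartesian_product cZ1
    by (simp only: mult_2 power_add)
  finally show ?thesis using rS rSs by simp
qed



lemma claim3:
  fixes p :: nat and g :: nat
  assumes p: "prime p" and g: "g \<ge> 2"
    and R0: "res_form (a 1) (b 1) (c 1) (a 2) (b 2) (c 2) \<noteq> 0"
  shows "int (rho_star g a b c (\<lambda>i. p)) \<le> \<bar>res_form (a 1) (b 1) (c 1) (a 2) (b 2) (c 2)\<bar>^(2*g-1) * int p"
proof -
  define R where "R = res_form (a 1) (b 1) (c 1) (a 2) (b 2) (c 2)"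
  define q where "q = int p"
  have q: "prime q" unfolding q_def using p by simp
  have qq: "q > 1" using q prime_gt_1_int by blast
  have g1: "g \<ge> 1" using g by simp
  define P where "P = q^g"
  have Ppos: "P > 0" unfolding P_def using qq by simp
  define Ss where "Ss = {(x1::int, x2::int). 0 \<le> x1 \<and> x1 < P \<and> 0 \<le> x2 \<and> x2 < P \<and>
              (\<forall>i\<in>{1..g}. q dvd qform (a i) (b i) (c i) x1 x2) \<and> gcd (gcd x1 x2) P = 1}"
  have rSs: "rho_star g a b c (\<lambda>i. p) = card Ss"
    unfolding rho_star_def Ss_def P_def q_def Let_def prod_const_p by (rule refl)
  have key: "\<And>x1 x2. gcd (gcd x1 x2) P = 1 \<longleftrightarrow> \<not> (q dvd x1 \<and> q dvd x2)"
    unfolding P_def by (rule gcd_prime_pow_iff[OF q g1])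
  show ?thesis
  proof (cases "q dvd R")
    case True
    have qR: "q \<le> \<bar>R\<bar>" using dvd_abs_le[OF True] R0 qq unfolding R_def by simp
    have "Ss \<subseteq> {0..<P} \<times> {0..<P}" unfolding Ss_def by auto
    then have "card Ss \<le> card ({0..<P} \<times> {0..<P})" by (rule card_mono[rotated]) simp
    then have "int (card Ss) \<le> int (nat P) * int (nat P)"
      by (metis card_atLeastLessThan_int card_cartesian_product diff_zero of_nat_le_iff of_nat_mult)
    then have "int (card Ss) \<le> P * P" using Ppos by simp
    also have "\<dots> = q^(2*g-1) * q" unfolding P_def using g
      by (simp add: power_add[symmetric] mult_2 power_Suc2[symmetric])
    also have "\<dots> \<le> \<bar>R\<bar>^(2*g-1) * q" using qR qq by (intro mult_right_mono power_mono) auto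
    finally show ?thesis unfolding rSs R_def q_def .
  next
    case False
    have "Ss = {}"
    proof (rule ccontr)
      assume "Ss \<noteq> {}"
      then obtain x where xs: "x \<in> Ss" by blast
      obtain x1 x2 where x: "x = (x1, x2)" by (cases x)
      have "0 \<le> x1 \<and> x1 < P \<and> 0 \<le> x2 \<and> x2 < P \<and> (\<forall>i\<in>{1..g}. q dvd qform (a i) (b i) (c i) x1 x2) \<and> gcd (gcd x1 x2) P = 1"
        using xs unfolding Ss_def x by (simp only: mem_Collect_eq case_prod_conv) blast
      then have all: "\<forall>i\<in>{1..g}. q dvd qform (a i) (b i) (c i) x1 x2" and gg: "gcd (gcd x1 x2) P = 1"
        by blast+
      have "1 \<in> {1..g}" "2 \<in> {1..g}" using g by auto
      then have d1: "q^1 dvd qform (a 1) (b 1) (c 1) x1 x2" and d2: "q^1 dvd qform (a 2) (b 2) (c 2) x1 x2"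
        using all by auto
      have "\<not> (q dvd x1 \<and> q dvd x2)" using gg by (rule key[THEN iffD1])
      then have prim: "\<not> q dvd x1 \<or> \<not> q dvd x2" by blast
      have "q^1 dvd R" unfolding R_def by (rule res_prim[OF q prim d1 d2])
      then show False using False by simp
    qed
    then show ?thesis unfolding rSs using qq by simp
  qed
qed

lemma root2:
  fixes q a b c :: int
  assumes q: "prime q" and na: "\<not> q dvd a"
  shows "card {t \<in> {0..<q}. q dvd a*t^2 + 2*b*t + c} \<le> 2"
proof -
  define T where "T = {t \<in> {0..<q}. q dvd a*t^2 + 2*b*t + c}"
  have finT: "finite T" unfolding T_def by (rule finite_subset[of _ "{0..<q}"]) auto
  show ?thesis
  proof (cases "T = {}")
    case True then show ?thesis unfolding T_def[symmetric] by simp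
  next
    case False
    then obtain t1 where t1: "t1 \<in> T" by blast
    define U where "U = T - {t1}"
    have finU: "finite U" unfolding U_def using finT by simp
    have U: "\<And>t. t \<in> U \<Longrightarrow> 0 \<le> t \<and> t < q \<and> q dvd (2*a*t1 + 2*b) + a*(t - t1)"
    proof -
      fix t assume tU: "t \<in> U"
      then have tT: "t \<in> T" and ne: "t \<noteq> t1" unfolding U_def by auto
      have r: "0 \<le> t" "t < q" "q dvd a*t^2 + 2*b*t + c" using tT unfolding T_def by auto
      have r1: "0 \<le> t1" "t1 < q" "q dvd a*t1^2 + 2*b*t1 + c" using t1 unfolding T_def by auto
      have "q dvd (a*t^2 + 2*b*t + c) - (a*t1^2 + 2*b*t1 + c)" using r(3) r1(3) by (rule dvd_diff)
      then have h: "q dvd (t - t1) * ((2*a*t1 + 2*b) + a*(t - t1))" by (simp only: quad_diff_id)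
      have "\<not> q dvd t - t1" using small_dvd_eq[of t q t1] r r1 ne by blast
      then have "q dvd (2*a*t1 + 2*b) + a*(t - t1)" using h q prime_dvd_mult_iff by blast
      then show "0 \<le> t \<and> t < q \<and> q dvd (2*a*t1 + 2*b) + a*(t - t1)" using r by simp
    qed
    have "card U \<le> Suc 0"
    proof (subst card_le_Suc0_iff_eq[OF finU], intro ballI)
      fix s t assume s: "s \<in> U" and t: "t \<in> U"
      have hs: "0 \<le> s" "s < q" "q dvd (2*a*t1 + 2*b) + a*(s - t1)" using U[OF s] by auto
      have ht: "0 \<le> t" "t < q" "q dvd (2*a*t1 + 2*b) + a*(t - t1)" using U[OF t] by auto
      have "q dvd ((2*a*t1 + 2*b) + a*(s - t1)) - ((2*a*t1 + 2*b) + a*(t - t1))" using hs(3) ht(3) by (rule dvd_diff)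
      moreover have "((2*a*t1 + 2*b) + a*(s - t1)) - ((2*a*t1 + 2*b) + a*(t - t1)) = a * (s - t)"
        by (simp add: algebra_simps)
      ultimately have "q dvd a * (s - t)" by simp
      then have "q dvd s - t" using na q prime_dvd_mult_iff by blast
      then show "s = t" using small_dvd_eq[of s q t] hs ht by blast
    qed
    moreover have "card T = Suc (card U)" unfolding U_def by (rule card_Suc_Diff1[OF finT t1, symmetric])
    ultimately show ?thesis unfolding T_def[symmetric] by simp
  qed
qed

lemma prod_delta_p:
  fixes g n p :: nat
  assumes "n \<in> {1..g}"
  shows "(\<Prod>i\<in>{1..g}. int (p ^ (if i = n then 1 else 0))) = int p"
proof -
  have "(\<Prod>i\<in>{1..g}. int (p ^ (if i = n then 1 else 0))) = (\<Prod>i\<in>{1..g}. if i = n then int p else 1)"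
    by (rule prod.cong) simp_all
  also have "\<dots> = int p" using assms by (subst prod.delta) auto
  finally show ?thesis .
qed

lemma claim4:
  fixes p :: nat
  assumes p: "prime p" and n: "n \<in> {1..g}" and na: "\<not> int p dvd a n"
  shows "rho g a b c (\<lambda>i. p ^ (if i = n then 1 else 0)) \<le> 2 * p"
proof -
  define q where "q = int p"
  have q: "prime q" unfolding q_def using p by simp
  have qq: "q > 1" using q prime_gt_1_int by blast
  define S where "S = {(x1::int, x2::int). 0 \<le> x1 \<and> x1 < q \<and> 0 \<le> x2 \<and> x2 < q \<and>
              (\<forall>i\<in>{1..g}. int (p ^ (if i = n then 1 else 0)) dvd qform (a i) (b i) (c i) x1 x2)}"
  have rS: "rho g a b c (\<lambda>i. p ^ (if i = n then 1 else 0)) = card S"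
    unfolding rho_def S_def q_def Let_def prod_delta_p[OF n] by (rule refl)
  define S2 where "S2 = {(y1, y2). 0 \<le> y1 \<and> y1 < q^1 \<and> 0 \<le> y2 \<and> y2 < q^1 \<and> \<not> q dvd y2 \<and> q^1 dvd qform (a n) (b n) (c n) y1 y2}"
  have sub: "S \<subseteq> insert (0, 0) S2"
  proof
    fix x assume xs: "x \<in> S"
    obtain x1 x2 where x: "x = (x1, x2)" by (cases x)
    have "0 \<le> x1 \<and> x1 < q \<and> 0 \<le> x2 \<and> x2 < q \<and> (\<forall>i\<in>{1..g}. int (p ^ (if i = n then 1 else 0)) dvd qform (a i) (b i) (c i) x1 x2)"
      using xs unfolding S_def x by (simp only: mem_Collect_eq case_prod_conv) blast
    then have r: "0 \<le> x1" "x1 < q" "0 \<le> x2" "x2 < q"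
      and all: "\<forall>i\<in>{1..g}. int (p ^ (if i = n then 1 else 0)) dvd qform (a i) (b i) (c i) x1 x2" by blast+
    have "int (p ^ (if n = n then 1 else 0)) dvd qform (a n) (b n) (c n) x1 x2" using all n by blast
    then have dq: "q dvd qform (a n) (b n) (c n) x1 x2" unfolding q_def by simp
    show "x \<in> insert (0, 0) S2"
    proof (cases "q dvd x2")
      case True
      then have x20: "x2 = 0" using small_dvd_zero r by blast
      then have "q dvd a n * x1^2" using dq unfolding qform_def by simp
      then have "q dvd x1^2" using na q prime_dvd_mult_iff unfolding q_def by blast
      then have "q dvd x1" using q prime_dvd_power by blast
      then have "x1 = 0" using small_dvd_zero r by blast
      then show ?thesis using x x20 by simp
    next
      case False
      then show ?thesis unfolding S2_def x using r dq by simp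
    qed
  qed
  have finS2: "finite S2" unfolding S2_def by (rule finite_box)
  have "card S \<le> card (insert (0, 0) S2)" by (rule card_mono[OF _ sub]) (simp add: finS2)
  also have "\<dots> \<le> Suc (card S2)" by (rule card_insert_le_m1) simp_all
  finally have c1: "card S \<le> Suc (card S2)" .
  have "card S2 \<le> card {t \<in> {0..<q^1}. q^1 dvd a n*t^2 + 2*b n*t + c n} * card {y2 \<in> {0..<q^1}. \<not> q dvd y2} * nat (q^1 div q^1)"
    unfolding S2_def by (rule prim_count[OF q]) (use qq in simp_all)
  also have "\<dots> = card {t \<in> {0..<q}. q dvd a n*t^2 + 2*b n*t + c n} * card {y2 \<in> {0..<q}. \<not> q dvd y2}"
    using qq by simp
  also have "\<dots> \<le> 2 * (p - 1)"
  proof (rule mult_mono)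
    show "card {t \<in> {0..<q}. q dvd a n*t^2 + 2*b n*t + c n} \<le> 2"
      using root2[OF q] na unfolding q_def by blast
    have "{y2 \<in> {0..<q}. \<not> q dvd y2} \<subseteq> {1..<q}"
    proof
      fix y assume "y \<in> {y2 \<in> {0..<q}. \<not> q dvd y2}"
      then have "0 \<le> y" "y < q" "\<not> q dvd y" by auto
      moreover have "y \<noteq> 0" using \<open>\<not> q dvd y\<close> by (metis dvd_0_right)
      ultimately show "y \<in> {1..<q}" by simp
    qed
    then have "card {y2 \<in> {0..<q}. \<not> q dvd y2} \<le> card {1..<q}" by (rule card_mono[rotated]) simp
    also have "\<dots> = p - 1" unfolding q_def by simp
    finally show "card {y2 \<in> {0..<q}. \<not> q dvd y2} \<le> p - 1" .
  qed simp_all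
  finally have "card S2 \<le> 2 * (p - 1)" .
  moreover have "p \<ge> 2" using p prime_ge_2_nat by blast
  ultimately show ?thesis using c1 rS by linarith
qed



lemma res_sym: "res_form a1 b1 c1 a2 b2 c2 = res_form a2 b2 c2 a1 b1 c1"
  unfolding res_form_def by algebra

lemma prod_pow_e: "(\<Prod>i\<in>{1..g}. int (p ^ e i)) = int p ^ (\<Sum>i\<in>{1..g}. e i)"
  by (simp add: power_sum)

lemma part1:
  fixes g :: nat and a b c :: "nat \<Rightarrow> int" and p :: nat and e :: "nat \<Rightarrow> nat" and \<sigma> :: "nat \<Rightarrow> nat"
    and Kb :: int and Rb :: nat
  assumes hg: "g \<ge> 2"
    and nz: "\<And>k. k \<in> {1..g} \<Longrightarrow> a k \<noteq> 0 \<and> c k \<noteq> 0 \<and> disc_form (a k) (b k) (c k) \<noteq> 0"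
    and rz: "\<And>i j. i \<in> {1..g} \<Longrightarrow> j \<in> {1..g} \<Longrightarrow> i \<noteq> j \<Longrightarrow>
              res_form (a i) (b i) (c i) (a j) (b j) (c j) \<noteq> 0 \<and> \<bar>res_form (a i) (b i) (c i) (a j) (b j) (c j)\<bar> \<le> int Rb"
    and kb: "\<And>k. k \<in> {1..g} \<Longrightarrow> \<bar>disc_form (a k) (b k) (c k)\<bar> * (1 + \<bar>a k\<bar>) + \<bar>disc_form (a k) (b k) (c k)\<bar> * (1 + \<bar>c k\<bar>) \<le> Kb"
    and p: "prime p" and sg: "\<sigma> permutes {1..g}"
    and mono: "\<forall>i j. 1 \<le> i \<longrightarrow> i \<le> j \<longrightarrow> j \<le> g \<longrightarrow> e (\<sigma> i) \<le> e (\<sigma> j)"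
  shows "real (rho g a b c (\<lambda>i. p ^ e i))
          \<le> real_of_int (1 + (int Rb + 2) * Kb) * real (e (\<sigma> g) - e (\<sigma> (g - 1)) + 1)
              * real p ^ (2 * (\<Sum>k\<in>{1..g-1}. e (\<sigma> k)) + e (\<sigma> g))"
proof -
  define q where "q = int p"
  have q: "prime q" unfolding q_def using p by simp
  define E where "E = (\<Sum>i\<in>{1..g}. e i)"
  define f where "f = \<sigma> g"
  define h where "h = \<sigma> (g - 1)"
  define M where "M = e f"
  define s where "s = e h"
  have fin: "f \<in> {1..g}" unfolding f_def permutes_in_image[OF sg] using hg by simp
  have hin: "h \<in> {1..g}" unfolding h_def permutes_in_image[OF sg] using hg by simp
  have fh: "f \<noteq> h"
  proof
    assume "f = h"
    then have "\<sigma> g = \<sigma> (g - 1)" unfolding f_def h_def .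
    then have "g = g - 1" using permutes_inj[OF sg] by (simp add: inj_eq)
    then show False using hg by simp
  qed
  have sM: "s \<le> M" unfolding s_def M_def f_def h_def using mono hg by simp
  have ME: "M \<le> E" unfolding M_def E_def using fin by (intro member_le_sum) auto
  have Esum: "E = (\<Sum>k\<in>{1..g-1}. e (\<sigma> k)) + M"
  proof -
    have "E = (\<Sum>k\<in>{1..g}. e (\<sigma> k))" unfolding E_def using sum.permute[OF sg, of e] by (simp add: comp_def)
    also have "{1..g} = {1..Suc (g-1)}" using hg by simp
    also have "(\<Sum>k\<in>{1..Suc (g-1)}. e (\<sigma> k)) = (\<Sum>k\<in>{1..g-1}. e (\<sigma> k)) + e (\<sigma> (Suc (g-1)))"
      by (rule sum.cl_ivl_Suc[THEN trans]) simp
    also have "Suc (g - 1) = g" using hg by simp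
    finally show ?thesis unfolding M_def f_def .
  qed
  have expo: "2*E - M = 2 * (\<Sum>k\<in>{1..g-1}. e (\<sigma> k)) + e (\<sigma> g)" unfolding Esum M_def f_def by simp
  define S where "S = {(x1::int, x2::int). 0 \<le> x1 \<and> x1 < q^E \<and> 0 \<le> x2 \<and> x2 < q^E \<and>
              (\<forall>i\<in>{1..g}. int (p ^ e i) dvd qform (a i) (b i) (c i) x1 x2)}"
  define S2 where "S2 = {(x1::int, x2::int). 0 \<le> x1 \<and> x1 < q^E \<and> 0 \<le> x2 \<and> x2 < q^E \<and>
              q^M dvd qform (a f) (b f) (c f) x1 x2 \<and> q^s dvd qform (a h) (b h) (c h) x1 x2}"
  have rS: "rho g a b c (\<lambda>i. p ^ e i) = card S"
    unfolding rho_def S_def q_def E_def Let_def prod_pow_e by (rule refl)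
  have sub: "S \<subseteq> S2"
  proof
    fix x assume xs: "x \<in> S"
    obtain x1 x2 where x: "x = (x1, x2)" by (cases x)
    have "0 \<le> x1 \<and> x1 < q^E \<and> 0 \<le> x2 \<and> x2 < q^E \<and> (\<forall>i\<in>{1..g}. int (p ^ e i) dvd qform (a i) (b i) (c i) x1 x2)"
      using xs unfolding S_def x by (simp only: mem_Collect_eq case_prod_conv) blast
    then have r: "0 \<le> x1" "x1 < q^E" "0 \<le> x2" "x2 < q^E"
      and all: "\<forall>i\<in>{1..g}. int (p ^ e i) dvd qform (a i) (b i) (c i) x1 x2" by blast+
    have "int (p ^ e f) dvd qform (a f) (b f) (c f) x1 x2" using all fin by blast
    then have d1: "q^M dvd qform (a f) (b f) (c f) x1 x2" unfolding q_def M_def by simp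
    have "int (p ^ e h) dvd qform (a h) (b h) (c h) x1 x2" using all hin by blast
    then have d2: "q^s dvd qform (a h) (b h) (c h) x1 x2" unfolding q_def s_def by simp
    show "x \<in> S2" unfolding S2_def x using r d1 d2 by simp
  qed
  have finS2: "finite S2" unfolding S2_def by (rule finite_box)
  have c1: "card S \<le> card S2" by (rule card_mono[OF finS2 sub])
  have nzf: "a f \<noteq> 0 \<and> c f \<noteq> 0 \<and> disc_form (a f) (b f) (c f) \<noteq> 0" using nz[OF fin] .
  have rzf: "res_form (a f) (b f) (c f) (a h) (b h) (c h) \<noteq> 0 \<and> \<bar>res_form (a f) (b f) (c f) (a h) (b h) (c h)\<bar> \<le> int Rb"
    using rz[OF fin hin fh] .
  have mb: "int (card S2) \<le> (1 + (int Rb + 2) * Kb) * int (M - s + 1) * q^(2*E - M)"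
    unfolding S2_def
    by (rule main_bound[OF q]) (use nzf rzf kb[OF fin] sM ME in auto)
  have "real (rho g a b c (\<lambda>i. p ^ e i)) = real (card S)" using rS by simp
  also have "\<dots> \<le> real (card S2)" using c1 by simp
  also have "\<dots> = real_of_int (int (card S2))" by simp
  also have "\<dots> \<le> real_of_int ((1 + (int Rb + 2) * Kb) * int (M - s + 1) * q^(2*E - M))"
    using mb by (rule of_int_le_iff[THEN iffD2])
  also have "\<dots> = real_of_int (1 + (int Rb + 2) * Kb) * real (M - s + 1) * real p ^ (2*E - M)"
    unfolding q_def by simp
  finally have fi: "real (rho g a b c (\<lambda>i. p ^ e i)) \<le> real_of_int (1 + (int Rb + 2) * Kb) * real (M - s + 1) * real p ^ (2*E - M)" .
  then show ?thesis unfolding expo unfolding M_def s_def f_def h_def .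
qed

theorem lemma2p4:
  fixes g :: nat and a b c :: "nat \<Rightarrow> int"
  assumes hg: "g \<ge> 2"
    and hirr: "\<forall>i\<in>{1..g}. irreducible_form (a i) (b i) (c i)"
    and ha: "\<forall>i\<in>{1..g}. [a i = 1] (mod 4)"
    and hD: "(\<Prod>p\<in>{p::nat. prime p \<and> p \<le> 2 * g}. int p)
             * (\<Prod>k\<in>{1..g}. a k * c k * disc_form (a k) (b k) (c k))
             * (\<Prod>(i, j)\<in>{(i, j). 1 \<le> i \<and> i < j \<and> j \<le> g}.
                  res_form (a i) (b i) (c i) (a j) (b j) (c j)) \<noteq> 0"
  shows
    "(\<exists>C :: real. \<forall>(p::nat) (e::nat \<Rightarrow> nat) \<sigma>.
        prime p \<longrightarrow> \<sigma> permutes {1..g} \<longrightarrow>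
        (\<forall>i j. 1 \<le> i \<longrightarrow> i \<le> j \<longrightarrow> j \<le> g \<longrightarrow> e (\<sigma> i) \<le> e (\<sigma> j)) \<longrightarrow>
        real (rho g a b c (\<lambda>i. p ^ e i))
          \<le> C * real (e (\<sigma> g) - e (\<sigma> (g - 1)) + 1)
              * real p ^ (2 * (\<Sum>k\<in>{1..g-1}. e (\<sigma> k)) + e (\<sigma> g)))
     \<and> (\<forall>p::nat. prime p \<longrightarrow>
          rho g a b c (\<lambda>i. p) = rho_star g a b c (\<lambda>i. p) + p ^ (2 * (g - 1)))
     \<and> (\<exists>C :: real. \<forall>p::nat. prime p \<longrightarrow>
          \<bar>real (rho g a b c (\<lambda>i. p)) - real p ^ (2 * (g - 1))\<bar> \<le> C * real p)
     \<and> finite {p::nat. prime p \<and>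
          \<not> (\<forall>n\<in>{1..g}. rho g a b c (\<lambda>i. p ^ (if i = n then 1 else 0)) \<le> 2 * p)}"
proof -
  define Pairs where "Pairs = {(i, j). 1 \<le> i \<and> i < j \<and> j \<le> (g::nat)}"
  have finP: "finite Pairs" unfolding Pairs_def
    by (rule finite_subset[of _ "{1..g} \<times> {1..g}"]) auto
  define X1 where "X1 = (\<Prod>p\<in>{p::nat. prime p \<and> p \<le> 2 * g}. int p)"
  define X2 where "X2 = (\<Prod>k\<in>{1..g}. a k * c k * disc_form (a k) (b k) (c k))"
  define X3 where "X3 = (\<Prod>(i, j)\<in>Pairs. res_form (a i) (b i) (c i) (a j) (b j) (c j))"
  have hD': "X1 * X2 * X3 \<noteq> 0" using hD unfolding X1_def X2_def X3_def Pairs_def .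
  have X2nz: "X2 \<noteq> 0" using hD' by auto
  have X3nz: "X3 \<noteq> 0" using hD' by auto
  have nz: "\<And>k. k \<in> {1..g} \<Longrightarrow> a k \<noteq> 0 \<and> c k \<noteq> 0 \<and> disc_form (a k) (b k) (c k) \<noteq> 0"
  proof -
    fix k assume k: "k \<in> {1..g}"
    have "a k * c k * disc_form (a k) (b k) (c k) \<noteq> 0"
      using X2nz k unfolding X2_def by (simp add: prod_zero_iff)
    then show "a k \<noteq> 0 \<and> c k \<noteq> 0 \<and> disc_form (a k) (b k) (c k) \<noteq> 0" by auto
  qed
  have rz0: "\<And>i j. (i, j) \<in> Pairs \<Longrightarrow> res_form (a i) (b i) (c i) (a j) (b j) (c j) \<noteq> 0"
  proof -
    fix i j assume ij: "(i, j) \<in> Pairs"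
    have "\<forall>x\<in>Pairs. (case x of (i, j) \<Rightarrow> res_form (a i) (b i) (c i) (a j) (b j) (c j)) \<noteq> 0"
      using X3nz finP unfolding X3_def by (simp add: prod_zero_iff)
    then show "res_form (a i) (b i) (c i) (a j) (b j) (c j) \<noteq> 0" using ij by fastforce
  qed
  define Rb where "Rb = nat (\<Sum>(i, j)\<in>Pairs. \<bar>res_form (a i) (b i) (c i) (a j) (b j) (c j)\<bar>)"
  have Rbi: "\<And>i j. (i, j) \<in> Pairs \<Longrightarrow> \<bar>res_form (a i) (b i) (c i) (a j) (b j) (c j)\<bar> \<le> int Rb"
  proof -
    fix i j assume ij: "(i, j) \<in> Pairs"
    have "(\<lambda>(i, j). \<bar>res_form (a i) (b i) (c i) (a j) (b j) (c j)\<bar>) (i, j)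
        \<le> (\<Sum>(i, j)\<in>Pairs. \<bar>res_form (a i) (b i) (c i) (a j) (b j) (c j)\<bar>)"
      by (rule member_le_sum[OF ij _ finP]) auto
    moreover have "0 \<le> (\<Sum>(i, j)\<in>Pairs. \<bar>res_form (a i) (b i) (c i) (a j) (b j) (c j)\<bar>)"
      by (rule sum_nonneg) auto
    ultimately show "\<bar>res_form (a i) (b i) (c i) (a j) (b j) (c j)\<bar> \<le> int Rb" unfolding Rb_def by simp
  qed
  have rz: "\<And>i j. i \<in> {1..g} \<Longrightarrow> j \<in> {1..g} \<Longrightarrow> i \<noteq> j \<Longrightarrow>
              res_form (a i) (b i) (c i) (a j) (b j) (c j) \<noteq> 0 \<and> \<bar>res_form (a i) (b i) (c i) (a j) (b j) (c j)\<bar> \<le> int Rb"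
  proof -
    fix i j assume i: "i \<in> {1..g}" and j: "j \<in> {1..g}" and ij: "i \<noteq> j"
    show "res_form (a i) (b i) (c i) (a j) (b j) (c j) \<noteq> 0 \<and> \<bar>res_form (a i) (b i) (c i) (a j) (b j) (c j)\<bar> \<le> int Rb"
    proof (cases "i < j")
      case True
      then have "(i, j) \<in> Pairs" unfolding Pairs_def using i j by simp
      then show ?thesis using rz0 Rbi by blast
    next
      case False
      then have "(j, i) \<in> Pairs" unfolding Pairs_def using i j ij by simp
      then show ?thesis using rz0 Rbi res_sym[of "a i" "b i" "c i" "a j" "b j" "c j"] by metis
    qed
  qed
  define Kb where "Kb = (\<Sum>k\<in>{1..g}. \<bar>disc_form (a k) (b k) (c k)\<bar> * (1 + \<bar>a k\<bar>) + \<bar>disc_form (a k) (b k) (c k)\<bar> * (1 + \<bar>c k\<bar>))"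
  have kb: "\<And>k. k \<in> {1..g} \<Longrightarrow> \<bar>disc_form (a k) (b k) (c k)\<bar> * (1 + \<bar>a k\<bar>) + \<bar>disc_form (a k) (b k) (c k)\<bar> * (1 + \<bar>c k\<bar>) \<le> Kb"
    unfolding Kb_def by (rule member_le_sum) auto
  have P1: "\<exists>C :: real. \<forall>(p::nat) (e::nat \<Rightarrow> nat) \<sigma>.
        prime p \<longrightarrow> \<sigma> permutes {1..g} \<longrightarrow>
        (\<forall>i j. 1 \<le> i \<longrightarrow> i \<le> j \<longrightarrow> j \<le> g \<longrightarrow> e (\<sigma> i) \<le> e (\<sigma> j)) \<longrightarrow>
        real (rho g a b c (\<lambda>i. p ^ e i))
          \<le> C * real (e (\<sigma> g) - e (\<sigma> (g - 1)) + 1)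
              * real p ^ (2 * (\<Sum>k\<in>{1..g-1}. e (\<sigma> k)) + e (\<sigma> g))"
    by (rule exI[of _ "real_of_int (1 + (int Rb + 2) * Kb)"], intro allI impI, rule part1[OF hg nz rz kb])
  have P2: "\<forall>p::nat. prime p \<longrightarrow> rho g a b c (\<lambda>i. p) = rho_star g a b c (\<lambda>i. p) + p ^ (2 * (g - 1))"
    using claim2 hg by simp
  have R12: "res_form (a 1) (b 1) (c 1) (a 2) (b 2) (c 2) \<noteq> 0"
    using rz[of 1 2] hg by simp
  have P3: "\<exists>C :: real. \<forall>p::nat. prime p \<longrightarrow>
          \<bar>real (rho g a b c (\<lambda>i. p)) - real p ^ (2 * (g - 1))\<bar> \<le> C * real p"
  proof (rule exI[of _ "real_of_int (\<bar>res_form (a 1) (b 1) (c 1) (a 2) (b 2) (c 2)\<bar>^(2*g-1))"], intro allI impI)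
    fix p :: nat assume p: "prime p"
    have "real (rho g a b c (\<lambda>i. p)) - real p ^ (2 * (g - 1)) = real (rho_star g a b c (\<lambda>i. p))"
      using claim2[OF p, of g a b c] hg by simp
    moreover have "real_of_int (int (rho_star g a b c (\<lambda>i. p)))
       \<le> real_of_int (\<bar>res_form (a 1) (b 1) (c 1) (a 2) (b 2) (c 2)\<bar>^(2*g-1) * int p)"
      using claim3[OF p hg R12] by (rule of_int_le_iff[THEN iffD2])
    ultimately show "\<bar>real (rho g a b c (\<lambda>i. p)) - real p ^ (2 * (g - 1))\<bar>
       \<le> real_of_int (\<bar>res_form (a 1) (b 1) (c 1) (a 2) (b 2) (c 2)\<bar>^(2*g-1)) * real p" by simp
  qed
  have P4: "finite {p::nat. prime p \<and>
          \<not> (\<forall>n\<in>{1..g}. rho g a b c (\<lambda>i. p ^ (if i = n then 1 else 0)) \<le> 2 * p)}"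
  proof (rule finite_subset[of _ "{..nat (\<Sum>i\<in>{1..g}. \<bar>a i\<bar>)}"])
    show "{p::nat. prime p \<and> \<not> (\<forall>n\<in>{1..g}. rho g a b c (\<lambda>i. p ^ (if i = n then 1 else 0)) \<le> 2 * p)}
        \<subseteq> {..nat (\<Sum>i\<in>{1..g}. \<bar>a i\<bar>)}"
    proof
      fix p assume "p \<in> {p::nat. prime p \<and> \<not> (\<forall>n\<in>{1..g}. rho g a b c (\<lambda>i. p ^ (if i = n then 1 else 0)) \<le> 2 * p)}"
      then have p: "prime p" and ex: "\<exists>n\<in>{1..g}. \<not> rho g a b c (\<lambda>i. p ^ (if i = n then 1 else 0)) \<le> 2 * p"
        by auto
      then obtain n where n: "n \<in> {1..g}" and bad: "\<not> rho g a b c (\<lambda>i. p ^ (if i = n then 1 else 0)) \<le> 2 * p"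
        by blast
      have "int p dvd a n" using claim4[OF p n] bad by blast
      moreover have "a n \<noteq> 0" using nz[OF n] by blast
      ultimately have "int p \<le> \<bar>a n\<bar>" using p prime_gt_0_nat by (intro dvd_abs_le) auto
      also have "\<bar>a n\<bar> \<le> (\<Sum>i\<in>{1..g}. \<bar>a i\<bar>)" by (rule member_le_sum[OF n]) auto
      finally show "p \<in> {..nat (\<Sum>i\<in>{1..g}. \<bar>a i\<bar>)}" by simp
    qed
  qed simp
  show ?thesis using P1 P2 P3 P4 by blast
qed



end
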